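(* (Tail-sum formula) Let $\rho$ be a density operator on $H$ and let $f\ge 0$ be a random variable. Then $$\int f\,d\mu_\rho=\int_0^\infty\mu_\rho\left(\{x\in\Omega: f(x)>\lambda\}\right)d\lambda,$$ where $d\lambda$ is Lebesgue measure on $\mathbb{R}$.
   Context: $(\Omega,\mathcal{A},\nu)$ is a probability space and $H=L_2(\Omega,\mathcal{A},\nu)$ is the complex Hilbert space with inner product $\langle f,g\rangle=\int\bar f g\,d\nu$. A random variable is a real-valued $f\in H$; $\chi_A$ is the characteristic function of $A\in\mathcal{A}$, and $\mu(A)$ is the operator $u\mapsto\left(\int_A u\,d\nu\right)\chi_A$ on $H$. A density operator is a positive trace-class operator of trace $1$; for a density operator $\rho$, $\mu_\rho(A)=\mathrm{tr}[\rho\mu(A)]$. For a random variable $f\ge 0$, its quantization $\widehat f$ is the operator $(\widehat f u)(y)=\int\min[f(x),f(y)]\,u(x)\,d\nu(x)$, and the $q$-integral is $\int f\,d\mu_\rho=\mathrm{tr}(\rho\widehat f)$. *)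

theory Defs
  imports "HOL-Probability.Probability"
begin

text \<open>The complex Hilbert space H = L2(Omega, A, nu) is represented by the set of
  (representatives of) square-integrable complex functions; operators on H are
  represented by maps on functions that respect a.e.-equality.\<close>

definition L2 :: "'a measure \<Rightarrow> ('a \<Rightarrow> complex) set" where
  "L2 M = {u. u \<in> borel_measurable M \<and> integrable M (\<lambda>x. (cmod (u x))\<^sup>2)}"

definition inner_L2 :: "'a measure \<Rightarrow> ('a \<Rightarrow> complex) \<Rightarrow> ('a \<Rightarrow> complex) \<Rightarrow> complex" where
  "inner_L2 M f g = (LINT x|M. cnj (f x) * g x)"

definition norm2_L2 :: "'a measure \<Rightarrow> ('a \<Rightarrow> complex) \<Rightarrow> real" where
  "norm2_L2 M u = (LINT x|M. (cmod (u x))\<^sup>2)"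

definition onb :: "'a measure \<Rightarrow> ('a \<Rightarrow> complex) set \<Rightarrow> bool" where
  "onb M B \<longleftrightarrow> B \<subseteq> L2 M
     \<and> (\<forall>b\<in>B. \<forall>b'\<in>B. inner_L2 M b b' = (if b = b' then 1 else 0))
     \<and> (\<forall>u\<in>L2 M. (\<forall>b\<in>B. inner_L2 M b u = 0) \<longrightarrow> norm2_L2 M u = 0)"

definition bounded_op :: "'a measure \<Rightarrow> (('a \<Rightarrow> complex) \<Rightarrow> ('a \<Rightarrow> complex)) \<Rightarrow> bool" where
  "bounded_op M T \<longleftrightarrow>
     (\<forall>u\<in>L2 M. T u \<in> L2 M)
   \<and> (\<forall>u\<in>L2 M. \<forall>v\<in>L2 M. (AE x in M. u x = v x) \<longrightarrow> (AE x in M. T u x = T v x))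
   \<and> (\<forall>u\<in>L2 M. \<forall>v\<in>L2 M. \<forall>c::complex.
        AE x in M. T (\<lambda>y. u y + c * v y) x = T u x + c * T v x)
   \<and> (\<exists>K. \<forall>u\<in>L2 M. norm2_L2 M (T u) \<le> K * norm2_L2 M u)"

definition positive_op :: "'a measure \<Rightarrow> (('a \<Rightarrow> complex) \<Rightarrow> ('a \<Rightarrow> complex)) \<Rightarrow> bool" where
  "positive_op M T \<longleftrightarrow> (\<forall>u\<in>L2 M. Im (inner_L2 M u (T u)) = 0 \<and> 0 \<le> Re (inner_L2 M u (T u)))"

definition trace_op :: "'a measure \<Rightarrow> (('a \<Rightarrow> complex) \<Rightarrow> ('a \<Rightarrow> complex)) \<Rightarrow> complex" where
  "trace_op M T = infsum (\<lambda>b. inner_L2 M b (T b)) (SOME B. onb M B)"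

text \<open>Density operator: positive trace-class operator of trace 1 (for a positive
  operator this means the diagonal sum in an orthonormal basis equals 1).\<close>
definition density_op :: "'a measure \<Rightarrow> (('a \<Rightarrow> complex) \<Rightarrow> ('a \<Rightarrow> complex)) \<Rightarrow> bool" where
  "density_op M \<rho> \<longleftrightarrow> bounded_op M \<rho> \<and> positive_op M \<rho>
     \<and> (\<exists>B. onb M B \<and> ((\<lambda>b. inner_L2 M b (\<rho> b)) has_sum 1) B)"

definition mu_op :: "'a measure \<Rightarrow> 'a set \<Rightarrow> ('a \<Rightarrow> complex) \<Rightarrow> ('a \<Rightarrow> complex)" where
  "mu_op M A u = (\<lambda>y. (LINT x:A|M. u x) * indicator A y)"

definition mu_rho :: "'a measure \<Rightarrow> (('a \<Rightarrow> complex) \<Rightarrow> ('a \<Rightarrow> complex)) \<Rightarrow> 'a set \<Rightarrow> complex" where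
  "mu_rho M \<rho> A = trace_op M (\<rho> \<circ> mu_op M A)"

definition quant :: "'a measure \<Rightarrow> ('a \<Rightarrow> real) \<Rightarrow> ('a \<Rightarrow> complex) \<Rightarrow> ('a \<Rightarrow> complex)" where
  "quant M f u = (\<lambda>y. LINT x|M. complex_of_real (min (f x) (f y)) * u x)"

definition q_integral :: "'a measure \<Rightarrow> (('a \<Rightarrow> complex) \<Rightarrow> ('a \<Rightarrow> complex)) \<Rightarrow> ('a \<Rightarrow> real) \<Rightarrow> complex" where
  "q_integral M \<rho> f = trace_op M (\<rho> \<circ> quant M f)"

end

theory Submission imports Defs begin

lemma borel_measurable_cnj[measurable]:
  "f \<in> borel_measurable M \<Longrightarrow> (\<lambda>x. cnj (f x)) \<in> borel_measurable M"
  by (rule borel_measurable_continuous_on[where f=cnj]) (auto intro: continuous_intros)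

lemma two_mult_le_sq: "2 * ((a::real) * b) \<le> a^2 + b^2"
proof -
  have "(a-b)^2 = a^2 - 2 * (a*b) + b^2" by (simp add: power2_eq_square algebra_simps)
  moreover have "0 \<le> (a-b)^2" by simp
  ultimately show ?thesis by linarith
qed

lemma le_one_plus_sq: "(a::real) \<le> 1 + a^2"
proof -
  have "2 * a \<le> a^2 + 1" using two_mult_le_sq[of a 1] by simp
  thus ?thesis using zero_le_power2[of a] by linarith
qed

lemma sum_sq_le: "((a::real) + b)^2 \<le> 2 * a^2 + 2 * b^2"
proof -
  have "(a+b)^2 = a^2 + 2 * (a*b) + b^2" by (simp add: power2_eq_square algebra_simps)
  thus ?thesis using two_mult_le_sq[of a b] by linarith
qed

lemma emeasure_Ico_finite: "emeasure lborel {a..<(c::real)} < \<top>"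
  by (cases "a \<le> c") auto

lemma integrable_cong_space:
  "integrable M g \<Longrightarrow> (\<And>x. x \<in> space M \<Longrightarrow> f x = g x) \<Longrightarrow> integrable M f"
  using Bochner_Integration.integrable_cong[of M M f g] by blast

lemma cnj_indicator[simp]: "cnj (indicator A x :: complex) = indicator A x"
  by (simp split: split_indicator)

lemma cnj_mult_self_real: "cnj z * z = complex_of_real ((cmod z)^2)"
  by (metis complex_norm_square mult.commute)


lemma has_sum_transfer:
  fixes a :: "'b \<Rightarrow> complex"
  assumes S: "countable S" "S \<subseteq> B" and zero: "\<And>b. b \<in> B \<Longrightarrow> b \<notin> S \<Longrightarrow> a b = 0"
    and hs: "((\<lambda>n. if n \<in> to_nat_on S ` S then a (from_nat_into S n) else 0) has_sum x) UNIV"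
  shows "(a has_sum x) B"
proof -
  define T where "T = to_nat_on S ` S"
  define e where "e = from_nat_into S"
  have inj: "inj_on e T" unfolding T_def e_def
    by (rule inj_on_inverseI[where g="to_nat_on S"]) simp
  have img: "e ` T = S" unfolding T_def e_def using S(1) by (force simp: image_image)
  have "((\<lambda>n. if n \<in> T then a (e n) else 0) has_sum x) T"
    using hs unfolding T_def[symmetric] e_def[symmetric]
    by (subst (asm) has_sum_cong_neutral[where T=T]) auto
  then have "((a \<circ> e) has_sum x) T"
    by (subst (asm) has_sum_cong_neutral[where T=T]) auto
  then have "(a has_sum x) (e ` T)" by (subst has_sum_reindex[OF inj])
  then have "(a has_sum x) S" using img by simp
  then show "(a has_sum x) B"
    by (subst (asm) has_sum_cong_neutral[where T=B]) (use S zero in auto)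
qed

lemma infsum_integral_interchange:
  fixes g :: "'b \<Rightarrow> 'c \<Rightarrow> complex" and N :: "'c measure" and D :: "'c \<Rightarrow> real"
  assumes S: "countable S" "S \<subseteq> B"
    and zero: "\<And>b l. b \<in> B \<Longrightarrow> b \<notin> S \<Longrightarrow> g b l = 0"
    and int: "\<And>b. b \<in> B \<Longrightarrow> integrable N (g b)"
    and dom: "\<And>F l. finite F \<Longrightarrow> F \<subseteq> B \<Longrightarrow> (\<Sum>b\<in>F. cmod (g b l)) \<le> D l"
    and D: "integrable N D"
  shows "integrable N (\<lambda>l. infsum (\<lambda>b. g b l) B)"
    and "((\<lambda>b. integral\<^sup>L N (g b)) has_sum integral\<^sup>L N (\<lambda>l. infsum (\<lambda>b. g b l) B)) B"
proof -
  define T where "T = to_nat_on S ` S"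
  define e where "e = from_nat_into S"
  define h where "h n = (if n \<in> T then g (e n) else (\<lambda>_. 0))" for n
  have hl: "h n l = (if n \<in> T then g (e n) l else 0)" for n l by (simp add: h_def)
  have eT: "e n \<in> S" if "n \<in> T" for n using that S(1) unfolding T_def e_def by auto
  have inj: "inj_on e T" unfolding T_def e_def
    by (rule inj_on_inverseI[where g="to_nat_on S"]) simp
  have hint: "integrable N (h n)" for n
    unfolding h_def using int eT S(2) by auto
  have D0: "0 \<le> D l" for l using dom[of "{}" l] by simp
  have sumle: "(\<Sum>n\<in>K. cmod (h n l)) \<le> D l" if K: "finite K" for K l
  proof -
    have "(\<Sum>n\<in>K. cmod (h n l)) = (\<Sum>n\<in>K \<inter> T. cmod (g (e n) l))"
      by (subst sum.inter_restrict[OF K]) (auto simp: hl intro!: sum.cong)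
    also have "\<dots> = (\<Sum>b\<in>e ` (K \<inter> T). cmod (g b l))"
      by (subst sum.reindex) (use inj in \<open>auto intro: inj_on_subset\<close>)
    also have "\<dots> \<le> D l"
      by (rule dom) (use K eT S(2) in auto)
    finally show ?thesis .
  qed
  have summ_pt: "summable (\<lambda>n. cmod (h n l))" for l
    by (rule summableI_nonneg_bounded[where x="D l"]) (auto intro: sumle)
  have summ_int: "summable (\<lambda>n. \<integral>x. norm (h n x) \<partial>N)"
  proof (rule summableI_nonneg_bounded[where x="integral\<^sup>L N D"])
    show "0 \<le> (\<integral>x. norm (h n x) \<partial>N)" for n by simp
    fix n
    have "(\<Sum>i<n. \<integral>x. norm (h i x) \<partial>N) = (\<integral>x. (\<Sum>i<n. norm (h i x)) \<partial>N)"
      by (rule Bochner_Integration.integral_sum[symmetric]) (use hint in auto)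
    also have "\<dots> \<le> integral\<^sup>L N D"
      by (rule Bochner_Integration.integral_mono) (use hint D sumle in auto)
    finally show "(\<Sum>i<n. \<integral>x. norm (h i x) \<partial>N) \<le> integral\<^sup>L N D" .
  qed
  have I1: "integrable N (\<lambda>l. \<Sum>n. h n l)"
    by (rule integrable_suminf[OF hint _ summ_int]) (use summ_pt in auto)
  have I2: "(\<lambda>n. integral\<^sup>L N (h n)) sums (\<integral>l. (\<Sum>n. h n l) \<partial>N)"
    by (rule sums_integral[OF hint _ summ_int]) (use summ_pt in auto)
  have pt: "infsum (\<lambda>b. g b l) B = (\<Sum>n. h n l)" for l
  proof -
    have "((\<lambda>n. h n l) has_sum (\<Sum>n. h n l)) UNIV"
      by (rule norm_summable_imp_has_sum[OF summ_pt]) (rule summable_sums[OF summable_norm_cancel[OF summ_pt]])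
    then have "((\<lambda>n. if n \<in> to_nat_on S ` S then g (from_nat_into S n) l else 0) has_sum (\<Sum>n. h n l)) UNIV"
      unfolding hl T_def e_def .
    then have "((\<lambda>b. g b l) has_sum (\<Sum>n. h n l)) B"
      by (intro has_sum_transfer[OF S]) (auto simp: zero)
    then show ?thesis by (rule infsumI)
  qed
  show "integrable N (\<lambda>l. infsum (\<lambda>b. g b l) B)"
    using I1 by (simp add: pt)
  have zint: "integral\<^sup>L N (g b) = 0" if "b \<in> B" "b \<notin> S" for b
  proof -
    have "g b = (\<lambda>_. 0)" using zero that by auto
    then show ?thesis by simp
  qed
  have "summable (\<lambda>n. norm (integral\<^sup>L N (h n)))"
    by (rule summable_comparison_test[OF _ summ_int]) (auto intro!: exI[of _ 0] integral_norm_bound)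
  then have "((\<lambda>n. integral\<^sup>L N (h n)) has_sum (\<integral>l. (\<Sum>n. h n l) \<partial>N)) UNIV"
    using I2 by (rule norm_summable_imp_has_sum)
  moreover have "integral\<^sup>L N (h n) = (if n \<in> to_nat_on S ` S then integral\<^sup>L N (g (from_nat_into S n)) else 0)" for n
    by (simp add: h_def T_def e_def)
  ultimately have "((\<lambda>b. integral\<^sup>L N (g b)) has_sum (\<integral>l. (\<Sum>n. h n l) \<partial>N)) B"
    by (intro has_sum_transfer[OF S]) (auto simp: zint)
  then show "((\<lambda>b. integral\<^sup>L N (g b)) has_sum integral\<^sup>L N (\<lambda>l. infsum (\<lambda>b. g b l) B)) B"
    by (simp add: pt)
qed

context prob_space
begin

lemma L2_meas: "u \<in> L2 M \<Longrightarrow> u \<in> borel_measurable M"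
  by (simp add: L2_def)

lemma L2_sq_int: "u \<in> L2 M \<Longrightarrow> integrable M (\<lambda>x. (cmod (u x))^2)"
  by (simp add: L2_def)

lemma L2_integrable: assumes "u \<in> L2 M" shows "integrable M u"
proof (rule Bochner_Integration.integrable_bound[where f="\<lambda>x. 1 + (cmod (u x))^2"])
  show "integrable M (\<lambda>x. 1 + (cmod (u x))^2)" using L2_sq_int[OF assms] by simp
  show "u \<in> borel_measurable M" using assms by (simp add: L2_def)
  show "AE x in M. norm (u x) \<le> norm (1 + (cmod (u x))^2)"
    using le_one_plus_sq by (simp add: add_nonneg_nonneg)
qed

lemma L2_prod_integrable: assumes "u \<in> L2 M" "v \<in> L2 M"
  shows "integrable M (\<lambda>x. cnj (u x) * v x)"
proof (rule Bochner_Integration.integrable_bound[where f="\<lambda>x. (cmod (u x))^2 + (cmod (v x))^2"])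
  show "integrable M (\<lambda>x. (cmod (u x))^2 + (cmod (v x))^2)" using L2_sq_int[OF assms(1)] L2_sq_int[OF assms(2)] by simp
  have [measurable]: "u \<in> borel_measurable M" "v \<in> borel_measurable M" using assms by (simp_all add: L2_def)
  show "(\<lambda>x. cnj (u x) * v x) \<in> borel_measurable M" by measurable
  have "\<And>a b::real. 0 \<le> a \<Longrightarrow> 0 \<le> b \<Longrightarrow> a * b \<le> a^2 + b^2"
  proof -
    fix a b :: real assume "0 \<le> a" "0 \<le> b"
    then have "0 \<le> a * b" by simp
    then show "a * b \<le> a^2 + b^2" using two_mult_le_sq[of a b] by linarith
  qed
  then show "AE x in M. norm (cnj (u x) * v x) \<le> norm ((cmod (u x))^2 + (cmod (v x))^2)"
    by (simp add: norm_mult)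
qed

lemma L2_lin: assumes "u \<in> L2 M" "v \<in> L2 M" shows "(\<lambda>x. u x + c * v x) \<in> L2 M"
  unfolding L2_def
proof (intro CollectI conjI)
  have [measurable]: "u \<in> borel_measurable M" "v \<in> borel_measurable M" using assms by (simp_all add: L2_def)
  show "(\<lambda>x. u x + c * v x) \<in> borel_measurable M" by measurable
  show "integrable M (\<lambda>x. (cmod (u x + c * v x))^2)"
  proof (rule Bochner_Integration.integrable_bound[where f="\<lambda>x. 2 * (cmod (u x))^2 + 2 * (cmod c)^2 * (cmod (v x))^2"])
    show "integrable M (\<lambda>x. 2 * (cmod (u x))^2 + 2 * (cmod c)^2 * (cmod (v x))^2)" using L2_sq_int[OF assms(1)] L2_sq_int[OF assms(2)] by simp
    show "(\<lambda>x. (cmod (u x + c * v x))^2) \<in> borel_measurable M" by measurable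
    have "\<And>a b :: complex. (cmod (a + b))^2 \<le> 2 * (cmod a)^2 + 2 * (cmod b)^2"
    proof -
      fix a b :: complex
      have "cmod (a+b) \<le> cmod a + cmod b" by (rule norm_triangle_ineq)
      hence "(cmod (a + b))^2 \<le> (cmod a + cmod b)^2" by (rule power_mono) simp
      also have "\<dots> \<le> 2 * (cmod a)^2 + 2 * (cmod b)^2" by (rule sum_sq_le)
      finally show "(cmod (a + b))^2 \<le> 2 * (cmod a)^2 + 2 * (cmod b)^2" .
    qed
    note ineq = this
    show "AE x in M. norm ((cmod (u x + c * v x))^2) \<le> norm (2 * (cmod (u x))^2 + 2 * (cmod c)^2 * (cmod (v x))^2)"
    proof (rule AE_I2)
      fix x
      show "norm ((cmod (u x + c * v x))^2) \<le> norm (2 * (cmod (u x))^2 + 2 * (cmod c)^2 * (cmod (v x))^2)"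
        using ineq[of "u x" "c * v x"] by (simp add: norm_mult power_mult_distrib mult.assoc)
    qed
  qed
qed

lemma L2_zero: "(\<lambda>x. 0) \<in> L2 M"
  by (simp add: L2_def)

lemma L2_sum: assumes "finite F" "\<And>i. i \<in> F \<Longrightarrow> e i \<in> L2 M"
  shows "(\<lambda>x. \<Sum>i\<in>F. c i * e i x) \<in> L2 M"
  using assms
proof (induction F rule: finite_induct)
  case empty then show ?case using L2_zero by simp
next
  case (insert j F)
  then have "(\<lambda>x. (\<Sum>i\<in>F. c i * e i x) + c j * e j x) \<in> L2 M"
    by (intro L2_lin) auto
  then show ?case using insert by (simp add: add.commute)
qed

lemma L2_diff: assumes "u \<in> L2 M" "v \<in> L2 M" shows "(\<lambda>x. u x - v x) \<in> L2 M"
  using L2_lin[OF assms, of "-1"] by simp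

lemma inner_cnj: "inner_L2 M v u = cnj (inner_L2 M u v)"
proof -
  have "cnj (inner_L2 M u v) = (LINT x|M. cnj (cnj (u x) * v x))"
    unfolding inner_L2_def by (simp only: Bochner_Integration.integral_cnj)
  also have "\<dots> = inner_L2 M v u" unfolding inner_L2_def by (simp add: mult.commute)
  finally show ?thesis by simp
qed

lemma inner_self: "inner_L2 M u u = complex_of_real (norm2_L2 M u)"
proof -
  have "(\<lambda>x. cnj (u x) * u x) = (\<lambda>x. complex_of_real ((cmod (u x))^2))"
    by (simp add: cnj_mult_self_real)
  thus ?thesis unfolding inner_L2_def norm2_L2_def by (simp only: integral_complex_of_real)
qed

lemma norm2_nonneg: "0 \<le> norm2_L2 M u"
  unfolding norm2_L2_def by simp

lemma inner_sum_right: assumes "finite F" "\<And>i. i \<in> F \<Longrightarrow> e i \<in> L2 M" "u \<in> L2 M"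
  shows "inner_L2 M u (\<lambda>x. \<Sum>i\<in>F. c i * e i x) = (\<Sum>i\<in>F. c i * inner_L2 M u (e i))"
proof -
  have "inner_L2 M u (\<lambda>x. \<Sum>i\<in>F. c i * e i x) = (LINT x|M. (\<Sum>i\<in>F. c i * (cnj (u x) * e i x)))"
    unfolding inner_L2_def by (simp add: sum_distrib_left mult.left_commute)
  also have "\<dots> = (\<Sum>i\<in>F. (LINT x|M. c i * (cnj (u x) * e i x)))"
    by (rule Bochner_Integration.integral_sum) (use assms L2_prod_integrable in auto)
  also have "\<dots> = (\<Sum>i\<in>F. c i * inner_L2 M u (e i))"
    unfolding inner_L2_def by simp
  finally show ?thesis .
qed

lemma inner_sum_left: assumes "finite F" "\<And>i. i \<in> F \<Longrightarrow> e i \<in> L2 M" "u \<in> L2 M"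
  shows "inner_L2 M (\<lambda>x. \<Sum>i\<in>F. c i * e i x) u = (\<Sum>i\<in>F. cnj (c i) * inner_L2 M (e i) u)"
proof -
  have "inner_L2 M (\<lambda>x. \<Sum>i\<in>F. c i * e i x) u = cnj (inner_L2 M u (\<lambda>x. \<Sum>i\<in>F. c i * e i x))"
    by (rule inner_cnj)
  also have "\<dots> = cnj (\<Sum>i\<in>F. c i * inner_L2 M u (e i))" by (simp only: inner_sum_right[OF assms])
  also have "\<dots> = (\<Sum>i\<in>F. cnj (c i) * inner_L2 M (e i) u)"
    by (simp add: inner_cnj[of "e _" u])
  finally show ?thesis .
qed

lemma inner_diff: assumes "u \<in> L2 M" "v \<in> L2 M"
  shows "inner_L2 M (\<lambda>x. u x - v x) (\<lambda>x. u x - v x)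
     = inner_L2 M u u - inner_L2 M u v - inner_L2 M v u + inner_L2 M v v"
proof -
  have "inner_L2 M (\<lambda>x. u x - v x) (\<lambda>x. u x - v x)
     = (LINT x|M. (cnj (u x) * u x - cnj (u x) * v x) - (cnj (v x) * u x - cnj (v x) * v x))"
    unfolding inner_L2_def by (simp add: algebra_simps)
  also have "\<dots> = inner_L2 M u u - inner_L2 M u v - inner_L2 M v u + inner_L2 M v v"
    unfolding inner_L2_def using assms L2_prod_integrable
    by (simp add: integral_diff)
  finally show ?thesis .
qed

lemma bessel:
  assumes F: "finite F" "F \<subseteq> L2 M" and orth: "\<And>b b'. b \<in> F \<Longrightarrow> b' \<in> F \<Longrightarrow> inner_L2 M b b' = (if b = b' then 1 else 0)"
    and u: "u \<in> L2 M"
  shows "(\<Sum>b\<in>F. (cmod (inner_L2 M b u))^2) \<le> norm2_L2 M u"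
proof -
  define c where "c b = inner_L2 M b u" for b
  define w where "w = (\<lambda>x. \<Sum>b\<in>F. c b * b x)"
  have eL2: "\<And>b. b \<in> F \<Longrightarrow> b \<in> L2 M" using F by auto
  have w: "w \<in> L2 M" unfolding w_def by (rule L2_sum) (use eL2 F in auto)
  have uw: "inner_L2 M u w = (\<Sum>b\<in>F. c b * cnj (c b))"
    unfolding w_def by (subst inner_sum_right[OF F(1) eL2 u]) (auto simp: c_def inner_cnj[of u])
  have wu: "inner_L2 M w u = (\<Sum>b\<in>F. cnj (c b) * c b)"
    unfolding w_def by (subst inner_sum_left[OF F(1) eL2 u]) (auto simp: c_def)
  have ww: "inner_L2 M w w = (\<Sum>b\<in>F. cnj (c b) * c b)"
  proof -
    have "inner_L2 M w w = (\<Sum>b\<in>F. cnj (c b) * inner_L2 M b w)"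
      unfolding w_def by (subst inner_sum_left[OF F(1) eL2]) (use w w_def eL2 in auto)
    also have "\<dots> = (\<Sum>b\<in>F. cnj (c b) * (\<Sum>b'\<in>F. c b' * inner_L2 M b b'))"
      unfolding w_def by (intro sum.cong refl, subst inner_sum_right[OF F(1) eL2]) (use eL2 w w_def in auto)
    also have "\<dots> = (\<Sum>b\<in>F. cnj (c b) * c b)"
    proof (intro sum.cong refl)
      fix b assume b: "b \<in> F"
      have "(\<Sum>b'\<in>F. c b' * inner_L2 M b b') = (\<Sum>b'\<in>F. if b' = b then c b else 0)"
        by (intro sum.cong refl) (auto simp: orth b)
      also have "\<dots> = c b" using b F by simp
      finally show "cnj (c b) * (\<Sum>b'\<in>F. c b' * inner_L2 M b b') = cnj (c b) * c b" by simp
    qed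
    finally show ?thesis .
  qed
  have sq: "\<And>b. cnj (c b) * c b = complex_of_real ((cmod (c b))^2)"
    by (rule cnj_mult_self_real)
  have "complex_of_real (norm2_L2 M (\<lambda>x. u x - w x)) = inner_L2 M (\<lambda>x. u x - w x) (\<lambda>x. u x - w x)"
    by (simp add: inner_self)
  also have "\<dots> = inner_L2 M u u - inner_L2 M u w - inner_L2 M w u + inner_L2 M w w"
    by (rule inner_diff[OF u w])
  also have "\<dots> = complex_of_real (norm2_L2 M u - (\<Sum>b\<in>F. (cmod (c b))^2))"
  proof -
    have "inner_L2 M u u - inner_L2 M u w - inner_L2 M w u + inner_L2 M w w
        = inner_L2 M u u - (\<Sum>b\<in>F. cnj (c b) * c b)"
      unfolding uw wu ww by (simp add: mult.commute)
    also have "\<dots> = complex_of_real (norm2_L2 M u) - complex_of_real (\<Sum>b\<in>F. (cmod (c b))^2)"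
      by (simp only: inner_self sq of_real_sum)
    finally show ?thesis by simp
  qed
  finally have "norm2_L2 M (\<lambda>x. u x - w x) = norm2_L2 M u - (\<Sum>b\<in>F. (cmod (c b))^2)"
    using of_real_eq_iff by blast
  with norm2_nonneg[of "\<lambda>x. u x - w x"] show ?thesis unfolding c_def by linarith
qed

lemma density_props:
  assumes "density_op M \<rho>"
  shows "\<And>u. u \<in> L2 M \<Longrightarrow> \<rho> u \<in> L2 M"
    and "\<And>u v c. u \<in> L2 M \<Longrightarrow> v \<in> L2 M \<Longrightarrow> AE x in M. \<rho> (\<lambda>y. u y + c * v y) x = \<rho> u x + c * \<rho> v x"
    and "\<And>u. u \<in> L2 M \<Longrightarrow> Im (inner_L2 M u (\<rho> u)) = 0"
    and "\<And>u. u \<in> L2 M \<Longrightarrow> 0 \<le> Re (inner_L2 M u (\<rho> u))"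
    and "\<exists>K. \<forall>u\<in>L2 M. norm2_L2 M (\<rho> u) \<le> K * norm2_L2 M u"
  using assms unfolding density_op_def bounded_op_def positive_op_def by blast+

lemma expand_quad:
  assumes "density_op M \<rho>" "u \<in> L2 M" "v \<in> L2 M"
  shows "inner_L2 M (\<lambda>y. u y + c * v y) (\<rho> (\<lambda>y. u y + c * v y))
    = inner_L2 M u (\<rho> u) + c * inner_L2 M u (\<rho> v) + cnj c * inner_L2 M v (\<rho> u)
      + (cnj c * c) * inner_L2 M v (\<rho> v)"
proof -
  note D = density_props[OF assms(1)]
  have w: "(\<lambda>y. u y + c * v y) \<in> L2 M" using L2_lin assms by blast
  have ru: "\<rho> u \<in> L2 M" and rv: "\<rho> v \<in> L2 M" and rw: "\<rho> (\<lambda>y. u y + c * v y) \<in> L2 M"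
    using D(1) assms w by auto
  have [measurable]: "u \<in> borel_measurable M" "v \<in> borel_measurable M" "\<rho> u \<in> borel_measurable M"
    "\<rho> v \<in> borel_measurable M" "\<rho> (\<lambda>y. u y + c * v y) \<in> borel_measurable M"
    using assms ru rv rw by (auto simp: L2_def)
  have "inner_L2 M (\<lambda>y. u y + c * v y) (\<rho> (\<lambda>y. u y + c * v y))
      = (LINT x|M. cnj (u x + c * v x) * (\<rho> u x + c * \<rho> v x))"
    unfolding inner_L2_def
    by (rule integral_cong_AE) (use D(2)[OF assms(2,3), of c] in \<open>auto elim!: AE_mp\<close>)
  also have "\<dots> = (LINT x|M. (cnj (u x) * \<rho> u x + c * (cnj (u x) * \<rho> v x))
       + (cnj c * (cnj (v x) * \<rho> u x) + (cnj c * c) * (cnj (v x) * \<rho> v x)))"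
    by (simp add: algebra_simps)
  also have "\<dots> = inner_L2 M u (\<rho> u) + c * inner_L2 M u (\<rho> v) + cnj c * inner_L2 M v (\<rho> u)
      + (cnj c * c) * inner_L2 M v (\<rho> v)"
    unfolding inner_L2_def
    using L2_prod_integrable[OF assms(2) ru] L2_prod_integrable[OF assms(2) rv]
      L2_prod_integrable[OF assms(3) ru] L2_prod_integrable[OF assms(3) rv]
    by (simp add: add.assoc)
  finally show ?thesis .
qed

lemma density_SA:
  assumes "density_op M \<rho>" "u \<in> L2 M" "v \<in> L2 M"
  shows "inner_L2 M u (\<rho> v) = cnj (inner_L2 M v (\<rho> u))"
proof -
  note D = density_props[OF assms(1)]
  define a where "a = inner_L2 M u (\<rho> v)"
  define b where "b = inner_L2 M v (\<rho> u)"
  have iu: "Im (inner_L2 M u (\<rho> u)) = 0" and iv: "Im (inner_L2 M v (\<rho> v)) = 0"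
    using D(3) assms by auto
  have "Im (inner_L2 M (\<lambda>y. u y + 1 * v y) (\<rho> (\<lambda>y. u y + 1 * v y))) = 0"
    using D(3) L2_lin assms by blast
  then have 1: "Im a + Im b = 0"
    unfolding expand_quad[OF assms] using iu iv by (simp add: a_def b_def)
  have "Im (inner_L2 M (\<lambda>y. u y + \<i> * v y) (\<rho> (\<lambda>y. u y + \<i> * v y))) = 0"
    using D(3) L2_lin assms by blast
  then have 2: "Re a - Re b = 0"
    unfolding expand_quad[OF assms] using iu iv by (simp add: a_def b_def)
  show ?thesis unfolding a_def[symmetric] b_def[symmetric]
    using 1 2 by (intro complex_eqI) auto
qed

lemma ind_mult: "(indicator A x :: complex) * z = (indicator A x :: real) *\<^sub>R z"
  by (simp split: split_indicator)

lemma prod_integrable: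
  fixes g h :: "'a \<Rightarrow> 'b::{real_normed_field, banach, second_countable_topology}"
  assumes g: "integrable M g" and h: "integrable M h"
  shows "integrable (M \<Otimes>\<^sub>M M) (\<lambda>p. g (fst p) * h (snd p))"
    and "(\<integral>p. g (fst p) * h (snd p) \<partial>(M \<Otimes>\<^sub>M M)) = integral\<^sup>L M g * integral\<^sup>L M h"
proof -
  interpret PM: pair_prob_space M M
    by (simp add: pair_prob_space_def pair_sigma_finite_def prob_space_axioms prob_space_imp_sigma_finite)
  have [measurable]: "g \<in> borel_measurable M" "h \<in> borel_measurable M"
    using g h by (auto intro: borel_measurable_integrable)
  show int: "integrable (M \<Otimes>\<^sub>M M) (\<lambda>p. g (fst p) * h (snd p))"
  proof (rule PM.Fubini_integrable)
    show "(\<lambda>p. g (fst p) * h (snd p)) \<in> borel_measurable (M \<Otimes>\<^sub>M M)" by measurable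
    show "integrable M (\<lambda>x. \<integral>y. norm (g (fst (x, y)) * h (snd (x, y))) \<partial>M)"
      using g h by (simp add: norm_mult)
    show "AE x in M. integrable M (\<lambda>y. g (fst (x, y)) * h (snd (x, y)))"
      using h by simp
  qed
  have "(\<integral>p. g (fst p) * h (snd p) \<partial>(M \<Otimes>\<^sub>M M)) = (\<integral>x. (\<integral>y. g (fst (x,y)) * h (snd (x,y)) \<partial>M) \<partial>M)"
    by (rule PM.integral_fst'[OF int, symmetric])
  also have "\<dots> = integral\<^sup>L M g * integral\<^sup>L M h" by simp
  finally show "(\<integral>p. g (fst p) * h (snd p) \<partial>(M \<Otimes>\<^sub>M M)) = integral\<^sup>L M g * integral\<^sup>L M h" .
qed

lemma f_L2_integrable:
  fixes f :: "'a \<Rightarrow> real"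
  assumes "f \<in> borel_measurable M" "integrable M (\<lambda>x. (f x)^2)"
  shows "integrable M f"
proof (rule Bochner_Integration.integrable_bound[where f="\<lambda>x. 1 + (f x)^2"])
  show "integrable M (\<lambda>x. 1 + (f x)^2)" using assms by simp
  show "f \<in> borel_measurable M" by fact
  show "AE x in M. norm (f x) \<le> norm (1 + (f x)^2)"
    using le_one_plus_sq[of "\<bar>f _\<bar>"] by (simp add: add_nonneg_nonneg)
qed

lemma f_b_integrable:
  assumes f: "f \<in> borel_measurable M" "integrable M (\<lambda>x. (f x)^2)" and b: "b \<in> L2 M"
  shows "integrable M (\<lambda>x. cmod (b x) * f x)"
proof (rule Bochner_Integration.integrable_bound[where f="\<lambda>x. (cmod (b x))^2 + (f x)^2"])
  show "integrable M (\<lambda>x. (cmod (b x))^2 + (f x)^2)" using assms L2_sq_int[OF b] by simp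
  have [measurable]: "b \<in> borel_measurable M" using b by (simp add: L2_def)
  show "(\<lambda>x. cmod (b x) * f x) \<in> borel_measurable M" using f by measurable
  have "\<And>a c::real. 0 \<le> a \<Longrightarrow> \<bar>a * c\<bar> \<le> a^2 + c^2"
  proof -
    fix a c :: real assume "0 \<le> a"
    have "2 * (a * \<bar>c\<bar>) \<le> a^2 + \<bar>c\<bar>^2" by (rule two_mult_le_sq)
    then have 1: "2 * (a * \<bar>c\<bar>) \<le> a^2 + c^2" by simp
    have 2: "0 \<le> a * \<bar>c\<bar>" using \<open>0 \<le> a\<close> by simp
    have 3: "\<bar>a * c\<bar> = a * \<bar>c\<bar>" using \<open>0 \<le> a\<close> by (simp add: abs_mult)
    show "\<bar>a * c\<bar> \<le> a^2 + c^2" using 1 2 3 by linarith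
  qed
  then show "AE x in M. norm (cmod (b x) * f x) \<le> norm ((cmod (b x))^2 + (f x)^2)"
    by (simp add: add_nonneg_nonneg)
qed

lemma fubini_main:
  assumes f[measurable]: "f \<in> borel_measurable M" and f2: "integrable M (\<lambda>x. (f x)^2)"
    and fnn: "\<forall>x\<in>space M. 0 \<le> f x"
    and b: "b \<in> L2 M" and w: "w \<in> L2 M"
  shows "set_integrable lborel {0..} (\<lambda>l. inner_L2 M (indicator {x\<in>space M. l < f x}) b * inner_L2 M w (indicator {x\<in>space M. l < f x}))"
    and "(LINT y|M. cnj (w y) * quant M f b y) = (LINT l:{0..}|lborel. inner_L2 M (indicator {x\<in>space M. l < f x}) b * inner_L2 M w (indicator {x\<in>space M. l < f x}))"
proof -
  define \<phi> where "\<phi> l = inner_L2 M (indicator {x\<in>space M. l < f x}) b * inner_L2 M w (indicator {x\<in>space M. l < f x})" for l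
  interpret PM: pair_prob_space M M
    by (simp add: pair_prob_space_def pair_sigma_finite_def prob_space_axioms prob_space_imp_sigma_finite)
  interpret Q: pair_sigma_finite "M \<Otimes>\<^sub>M M" lborel
    by (simp add: pair_sigma_finite_def PM.P.prob_space_axioms prob_space_imp_sigma_finite sigma_finite_lborel)
  interpret Q': pair_sigma_finite lborel "M \<Otimes>\<^sub>M M"
    by (simp add: pair_sigma_finite_def PM.P.prob_space_axioms prob_space_imp_sigma_finite sigma_finite_lborel)
  have [measurable]: "b \<in> borel_measurable M" "w \<in> borel_measurable M" using b w by (auto simp: L2_def)
  define H where "H = (\<lambda>z::('a\<times>'a)\<times>real. if 0 \<le> snd z \<and> snd z < f (fst (fst z)) \<and> snd z < f (snd (fst z))
      then b (fst (fst z)) * cnj (w (snd (fst z))) else 0)"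
  have Hm[measurable]: "H \<in> borel_measurable ((M \<Otimes>\<^sub>M M) \<Otimes>\<^sub>M lborel)"
    unfolding H_def by measurable
  have Hsec: "(\<lambda>l. H ((x,y),l)) = (\<lambda>l. indicator {0..<min (f x) (f y)} l *\<^sub>R (b x * cnj (w y)))" for x y
    unfolding H_def by (auto simp: fun_eq_iff split: split_indicator)
  have Hint: "integrable lborel (\<lambda>l. H ((x,y),l))" for x y
    unfolding Hsec by (intro integrable_scaleR_left integrable_real_indicator) (auto simp: emeasure_Ico_finite)
  have Hintegral: "(\<integral>l. H ((x,y),l) \<partial>lborel) = min (f x) (f y) *\<^sub>R (b x * cnj (w y))"
    if "x \<in> space M" "y \<in> space M" for x y
    unfolding Hsec using fnn that by simp
  have Hnorm: "(\<integral>l. norm (H ((x,y),l)) \<partial>lborel) = min (f x) (f y) * (cmod (b x) * cmod (w y))"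
    if "x \<in> space M" "y \<in> space M" for x y
  proof -
    have "(\<lambda>l. norm (H ((x,y),l))) = (\<lambda>l. indicator {0..<min (f x) (f y)} l * (cmod (b x) * cmod (w y)))"
      by (auto simp: H_def fun_eq_iff norm_mult split: split_indicator)
    then show ?thesis using fnn that by simp
  qed
  have intbf: "integrable M (\<lambda>x. cmod (b x) * f x)" by (rule f_b_integrable[OF f f2 b])
  have intw: "integrable M (\<lambda>y. cmod (w y))" using L2_integrable[OF w] by simp
  have intH: "integrable ((M \<Otimes>\<^sub>M M) \<Otimes>\<^sub>M lborel) H"
  proof (rule Q.Fubini_integrable)
    show "H \<in> borel_measurable ((M \<Otimes>\<^sub>M M) \<Otimes>\<^sub>M lborel)" by (rule Hm)
    have "integrable (M \<Otimes>\<^sub>M M) (\<lambda>p. min (f (fst p)) (f (snd p)) * (cmod (b (fst p)) * cmod (w (snd p))))"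
    proof (rule Bochner_Integration.integrable_bound)
      show "integrable (M \<Otimes>\<^sub>M M) (\<lambda>p. (cmod (b (fst p)) * f (fst p)) * cmod (w (snd p)))"
        by (rule prod_integrable(1)[OF intbf intw])
      show "(\<lambda>p. min (f (fst p)) (f (snd p)) * (cmod (b (fst p)) * cmod (w (snd p)))) \<in> borel_measurable (M \<Otimes>\<^sub>M M)"
        by measurable
      show "AE p in M \<Otimes>\<^sub>M M. norm (min (f (fst p)) (f (snd p)) * (cmod (b (fst p)) * cmod (w (snd p))))
          \<le> norm ((cmod (b (fst p)) * f (fst p)) * cmod (w (snd p)))"
      proof (rule AE_I2)
        fix p assume "p \<in> space (M \<Otimes>\<^sub>M M)"
        then have "fst p \<in> space M" "snd p \<in> space M" by (auto simp: space_pair_measure)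
        then have "0 \<le> f (fst p)" "0 \<le> f (snd p)" using fnn by auto
        then show "norm (min (f (fst p)) (f (snd p)) * (cmod (b (fst p)) * cmod (w (snd p))))
          \<le> norm ((cmod (b (fst p)) * f (fst p)) * cmod (w (snd p)))"
        proof -
          define X where "X = cmod (b (fst p)) * cmod (w (snd p))"
          have X: "0 \<le> X" unfolding X_def by simp
          have m0: "0 \<le> min (f (fst p)) (f (snd p))" using \<open>0 \<le> f (fst p)\<close> \<open>0 \<le> f (snd p)\<close> by simp
          have e1: "norm (min (f (fst p)) (f (snd p)) * (cmod (b (fst p)) * cmod (w (snd p)))) = min (f (fst p)) (f (snd p)) * X"
            using m0 X unfolding X_def by (simp add: abs_mult)
          have e2: "norm ((cmod (b (fst p)) * f (fst p)) * cmod (w (snd p))) = f (fst p) * X"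
            using \<open>0 \<le> f (fst p)\<close> unfolding X_def by (simp add: abs_mult)
          have "min (f (fst p)) (f (snd p)) * X \<le> f (fst p) * X" using X by (intro mult_right_mono) auto
          then show ?thesis unfolding e1 e2 .
        qed
      qed
    qed
    then show "integrable (M \<Otimes>\<^sub>M M) (\<lambda>p. \<integral>l. norm (H (p, l)) \<partial>lborel)"
      by (rule integrable_cong_space) (auto simp: space_pair_measure Hnorm)
    show "AE p in M \<Otimes>\<^sub>M M. integrable lborel (\<lambda>l. H (p, l))"
      using Hint by auto
  qed
  define G where "G p = min (f (fst p)) (f (snd p)) *\<^sub>R (b (fst p) * cnj (w (snd p)))" for p
  have HG: "(\<lambda>p. \<integral>l. H (p,l) \<partial>lborel) x = G x" if "x \<in> space (M \<Otimes>\<^sub>M M)" for x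
    using that Hintegral by (cases x) (auto simp: G_def space_pair_measure)
  have intG: "integrable (M \<Otimes>\<^sub>M M) G"
    using Q.integrable_fst'[OF intH] by (rule integrable_cong_space) (auto simp: HG)
  have "integral\<^sup>L ((M \<Otimes>\<^sub>M M) \<Otimes>\<^sub>M lborel) H = (\<integral>p. (\<integral>l. H (p,l) \<partial>lborel) \<partial>(M \<Otimes>\<^sub>M M))"
    by (rule Q.integral_fst'[OF intH, symmetric])
  also have "\<dots> = integral\<^sup>L (M \<Otimes>\<^sub>M M) G"
    by (rule Bochner_Integration.integral_cong) (auto simp: HG)
  also have "\<dots> = (\<integral>x. (\<integral>y. G (x,y) \<partial>M) \<partial>M)"
    by (rule PM.integral_fst'[OF intG, symmetric])
  also have "\<dots> = (\<integral>y. (\<integral>x. G (x,y) \<partial>M) \<partial>M)"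
    using PM.Fubini_integral[of "\<lambda>x y. G (x,y)"] intG by simp
  also have "\<dots> = (LINT y|M. cnj (w y) * quant M f b y)"
  proof (rule Bochner_Integration.integral_cong[OF refl])
    fix y assume "y \<in> space M"
    have "(\<integral>x. G (x,y) \<partial>M) = (\<integral>x. (complex_of_real (min (f x) (f y)) * b x) * cnj (w y) \<partial>M)"
      unfolding G_def by (simp add: scaleR_conv_of_real mult.assoc)
    also have "\<dots> = cnj (w y) * quant M f b y"
      unfolding quant_def by simp
    finally show "(\<integral>x. G (x,y) \<partial>M) = cnj (w y) * quant M f b y" .
  qed
  finally have LHS: "integral\<^sup>L ((M \<Otimes>\<^sub>M M) \<Otimes>\<^sub>M lborel) H = (LINT y|M. cnj (w y) * quant M f b y)" .
  have Hl: "(\<integral>p. H (p,l) \<partial>(M \<Otimes>\<^sub>M M)) = indicator {0..} l *\<^sub>R \<phi> l" for l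
  proof (cases "0 \<le> l")
    case False
    then show ?thesis unfolding H_def by simp
  next
    case True
    define A where "A = {x\<in>space M. l < f x}"
    have A: "A \<in> sets M" unfolding A_def by measurable
    have "(\<integral>p. H (p,l) \<partial>(M \<Otimes>\<^sub>M M)) = (\<integral>p. (indicator A (fst p) * b (fst p)) * (indicator A (snd p) * cnj (w (snd p))) \<partial>(M \<Otimes>\<^sub>M M))"
      by (rule Bochner_Integration.integral_cong) (auto simp: H_def A_def space_pair_measure True split: split_indicator)
    also have "\<dots> = (\<integral>x. indicator A x * b x \<partial>M) * (\<integral>y. indicator A y * cnj (w y) \<partial>M)"
    proof (rule prod_integrable(2))
      show "integrable M (\<lambda>x. indicator A x * b x)"
        unfolding ind_mult using A L2_integrable[OF b] by (intro integrable_mult_indicator)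
      show "integrable M (\<lambda>y. indicator A y * cnj (w y))"
        unfolding ind_mult using A L2_integrable[OF w] by (intro integrable_mult_indicator) auto
    qed
    also have "\<dots> = \<phi> l"
      unfolding \<phi>_def inner_L2_def A_def[symmetric]
      by (simp add: mult.commute[of "cnj (w _)"])
    finally show ?thesis using True by simp
  qed
  have intHs: "integrable (lborel \<Otimes>\<^sub>M (M \<Otimes>\<^sub>M M)) (\<lambda>(x, y). H (y, x))"
    by (rule Q.integrable_product_swap[OF intH])
  have "integrable lborel (\<lambda>l. \<integral>p. (\<lambda>(x, y). H (y, x)) (l, p) \<partial>(M \<Otimes>\<^sub>M M))"
    by (rule Q'.integrable_fst'[OF intHs])
  then show "set_integrable lborel {0..} \<phi>"
    unfolding set_integrable_def by (simp add: Hl)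
  have "integral\<^sup>L ((M \<Otimes>\<^sub>M M) \<Otimes>\<^sub>M lborel) H = (\<integral>p. (\<integral>l. H (p,l) \<partial>lborel) \<partial>(M \<Otimes>\<^sub>M M))"
    by (rule Q.integral_fst'[OF intH, symmetric])
  also have "\<dots> = (\<integral>l. (\<integral>p. H (p,l) \<partial>(M \<Otimes>\<^sub>M M)) \<partial>lborel)"
    using Q.Fubini_integral[of "\<lambda>p l. H (p,l)"] intH by simp
  also have "\<dots> = (LINT l:{0..}|lborel. \<phi> l)"
    unfolding set_lebesgue_integral_def by (simp add: Hl)
  finally show "(LINT y|M. cnj (w y) * quant M f b y) = (LINT l:{0..}|lborel. \<phi> l)"
    using LHS by simp
qed

lemma ind_L2: assumes "A \<in> sets M" shows "(indicator A :: 'a \<Rightarrow> complex) \<in> L2 M"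
  unfolding L2_def
proof (intro CollectI conjI)
  show "(indicator A :: 'a \<Rightarrow> complex) \<in> borel_measurable M" using assms by measurable
  have "(\<lambda>x. (cmod (indicator A x :: complex))^2) = (indicator A :: 'a \<Rightarrow> real)"
    by (auto simp: fun_eq_iff split: split_indicator)
  moreover have "integrable M (indicator A :: 'a \<Rightarrow> real)"
    by (rule integrable_real_indicator[OF assms]) (simp add: less_top[symmetric])
  ultimately show "integrable M (\<lambda>x. (cmod (indicator A x :: complex))^2)" by simp
qed

lemma norm2_ind: assumes "A \<in> sets M" shows "norm2_L2 M (indicator A :: 'a \<Rightarrow> complex) = measure M A"
proof -
  have "(\<lambda>x. (cmod (indicator A x :: complex))^2) = (indicator A :: 'a \<Rightarrow> real)"
    by (auto simp: fun_eq_iff split: split_indicator)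
  then show ?thesis unfolding norm2_L2_def using assms by (simp add: Int_absorb1 sets.sets_into_space)
qed

lemma quant_L2:
  assumes f[measurable]: "f \<in> borel_measurable M" and f2: "integrable M (\<lambda>x. (f x)^2)"
    and fnn: "\<forall>x\<in>space M. 0 \<le> f x" and b: "b \<in> L2 M"
  shows "quant M f b \<in> L2 M"
  unfolding L2_def
proof (intro CollectI conjI)
  have [measurable]: "b \<in> borel_measurable M" using b by (simp add: L2_def)
  show qm[measurable]: "quant M f b \<in> borel_measurable M"
    unfolding quant_def by measurable
  define c where "c = (\<integral>x. cmod (b x) \<partial>M)"
  have intb: "integrable M (\<lambda>x. cmod (b x))" using L2_integrable[OF b] by simp
  have bound: "cmod (quant M f b y) \<le> f y * c" if y: "y \<in> space M" for y
  proof -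
    have "cmod (quant M f b y) \<le> (\<integral>x. norm (complex_of_real (min (f x) (f y)) * b x) \<partial>M)"
      unfolding quant_def by (rule integral_norm_bound)
    also have "\<dots> \<le> (\<integral>x. f y * cmod (b x) \<partial>M)"
    proof (rule Bochner_Integration.integral_mono)
      show "integrable M (\<lambda>x. f y * cmod (b x))" using intb by simp
      show "\<And>x. x \<in> space M \<Longrightarrow> norm (complex_of_real (min (f x) (f y)) * b x) \<le> f y * cmod (b x)"
        using fnn y by (auto simp: norm_mult intro!: mult_right_mono)
      show "integrable M (\<lambda>x. norm (complex_of_real (min (f x) (f y)) * b x))"
      proof (rule Bochner_Integration.integrable_bound[where f="\<lambda>x. f y * cmod (b x)"])
        show "integrable M (\<lambda>x. f y * cmod (b x))" using intb by simp
        show "(\<lambda>x. norm (complex_of_real (min (f x) (f y)) * b x)) \<in> borel_measurable M" by measurable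
        show "AE x in M. norm (norm (complex_of_real (min (f x) (f y)) * b x)) \<le> norm (f y * cmod (b x))"
          using fnn y by (auto simp: norm_mult abs_mult intro!: mult_right_mono)
      qed
    qed
    also have "\<dots> = f y * c" unfolding c_def by simp
    finally show ?thesis .
  qed
  show "integrable M (\<lambda>x. (cmod (quant M f b x))^2)"
  proof (rule Bochner_Integration.integrable_bound[where f="\<lambda>y. (f y)^2 * c^2"])
    show "integrable M (\<lambda>y. (f y)^2 * c^2)" using f2 by simp
    show "(\<lambda>x. (cmod (quant M f b x))^2) \<in> borel_measurable M" by measurable
    show "AE x in M. norm ((cmod (quant M f b x))^2) \<le> norm ((f x)^2 * c^2)"
    proof (rule AE_I2)
      fix y assume y: "y \<in> space M"
      have "(cmod (quant M f b y))^2 \<le> (f y * c)^2"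
        by (rule power_mono[OF bound[OF y]]) simp
      then show "norm ((cmod (quant M f b y))^2) \<le> norm ((f y)^2 * c^2)"
        by (simp add: power_mult_distrib)
    qed
  qed
qed

lemma quant_term:
  assumes rho: "density_op M \<rho>"
    and f[measurable]: "f \<in> borel_measurable M" and f2: "integrable M (\<lambda>x. (f x)^2)"
    and fnn: "\<forall>x\<in>space M. 0 \<le> f x" and b: "b \<in> L2 M"
  shows "set_integrable lborel {0..} (\<lambda>l. inner_L2 M (indicator {x\<in>space M. l < f x}) b * inner_L2 M (\<rho> b) (indicator {x\<in>space M. l < f x}))"
    and "inner_L2 M b (\<rho> (quant M f b)) = (LINT l:{0..}|lborel. inner_L2 M (indicator {x\<in>space M. l < f x}) b * inner_L2 M (\<rho> b) (indicator {x\<in>space M. l < f x}))"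
proof -
  have w: "\<rho> b \<in> L2 M" using density_props(1)[OF rho b] .
  show "set_integrable lborel {0..} (\<lambda>l. inner_L2 M (indicator {x\<in>space M. l < f x}) b * inner_L2 M (\<rho> b) (indicator {x\<in>space M. l < f x}))"
    by (rule fubini_main(1)[OF f f2 fnn b w])
  have q: "quant M f b \<in> L2 M" by (rule quant_L2[OF f f2 fnn b])
  have "inner_L2 M b (\<rho> (quant M f b)) = cnj (inner_L2 M (quant M f b) (\<rho> b))"
    by (rule density_SA[OF rho b q])
  also have "\<dots> = (LINT y|M. cnj (cnj (quant M f b y) * \<rho> b y))"
    unfolding inner_L2_def by (simp only: Bochner_Integration.integral_cnj)
  also have "\<dots> = (LINT y|M. cnj (\<rho> b y) * quant M f b y)"
    by (simp add: mult.commute)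
  also have "\<dots> = (LINT l:{0..}|lborel. inner_L2 M (indicator {x\<in>space M. l < f x}) b * inner_L2 M (\<rho> b) (indicator {x\<in>space M. l < f x}))"
    by (rule fubini_main(2)[OF f f2 fnn b w])
  finally show "inner_L2 M b (\<rho> (quant M f b)) = (LINT l:{0..}|lborel. inner_L2 M (indicator {x\<in>space M. l < f x}) b * inner_L2 M (\<rho> b) (indicator {x\<in>space M. l < f x}))" .
qed

lemma mu_term:
  assumes rho: "density_op M \<rho>" and A: "A \<in> sets M" and b: "b \<in> L2 M"
  shows "inner_L2 M b (\<rho> (mu_op M A b)) = inner_L2 M (indicator A) b * inner_L2 M (\<rho> b) (indicator A)"
proof -
  define c where "c = inner_L2 M (indicator A) b"
  have mu: "mu_op M A b = (\<lambda>y. 0 + c * indicator A y)"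
    unfolding mu_op_def c_def inner_L2_def set_lebesgue_integral_def
    by (simp add: ind_mult)
  have muL2: "mu_op M A b \<in> L2 M" unfolding mu by (rule L2_lin[OF L2_zero ind_L2[OF A]])
  have w: "\<rho> b \<in> L2 M" using density_props(1)[OF rho b] .
  have "inner_L2 M b (\<rho> (mu_op M A b)) = cnj (inner_L2 M (mu_op M A b) (\<rho> b))"
    by (rule density_SA[OF rho b muL2])
  also have "inner_L2 M (mu_op M A b) (\<rho> b) = cnj c * inner_L2 M (indicator A) (\<rho> b)"
    unfolding mu inner_L2_def by (simp add: mult.assoc)
  also have "cnj (cnj c * inner_L2 M (indicator A) (\<rho> b)) = c * inner_L2 M (\<rho> b) (indicator A)"
    by (simp add: inner_cnj[of "\<rho> b"])
  finally show ?thesis unfolding c_def .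
qed

lemma countable_nonzero:
  assumes BL2: "B \<subseteq> L2 M" and orth: "\<forall>b\<in>B. \<forall>b'\<in>B. inner_L2 M b b' = (if b = b' then 1 else 0)"
    and u: "u \<in> L2 M"
  shows "countable {b\<in>B. inner_L2 M b u \<noteq> 0}"
proof -
  have "Infinite_Sum.abs_summable_on (\<lambda>b. (cmod (inner_L2 M b u))^2) B"
    unfolding abs_summable_iff_bdd_above
  proof (rule bdd_aboveI2)
    fix F assume "F \<in> {F. F \<subseteq> B \<and> finite F}"
    then have F: "F \<subseteq> B" "finite F" by auto
    have orth': "\<And>b b'. b\<in>F \<Longrightarrow> b'\<in>F \<Longrightarrow> inner_L2 M b b' = (if b = b' then 1 else 0)"
      using orth F by blast
    have "(\<Sum>b\<in>F. norm ((cmod (inner_L2 M b u))^2)) = (\<Sum>b\<in>F. (cmod (inner_L2 M b u))^2)" by simp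
    also have "\<dots> \<le> norm2_L2 M u"
      by (rule bessel[OF F(2) _ orth' u]) (use F BL2 in auto)
    finally show "(\<Sum>b\<in>F. norm ((cmod (inner_L2 M b u))^2)) \<le> norm2_L2 M u" .
  qed
  from abs_summable_countable[OF this] show ?thesis by simp
qed

lemma ind_inner_zero:
  fixes f :: "'a \<Rightarrow> real" and l :: real
  assumes f[measurable]: "f \<in> borel_measurable M" and b: "b \<in> L2 M"
    and z: "\<forall>q\<in>\<rat>. inner_L2 M (indicator {x\<in>space M. q < f x}) b = 0"
  shows "inner_L2 M (indicator {x\<in>space M. l < f x}) b = 0"
proof -
  have [measurable]: "b \<in> borel_measurable M" using b by (simp add: L2_def)
  have "\<forall>n. \<exists>r. r \<in> \<rat> \<and> l < r \<and> r < l + 1 / real (Suc n)"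
  proof
    fix n
    have "l < l + 1 / real (Suc n)" by simp
    from Rats_dense_in_real[OF this] show "\<exists>r. r \<in> \<rat> \<and> l < r \<and> r < l + 1 / real (Suc n)" by blast
  qed
  from choice[OF this] obtain q where q0: "\<forall>n. q n \<in> \<rat> \<and> l < q n \<and> q n < l + 1 / real (Suc n)"
    by blast
  then have q: "\<And>n. q n \<in> \<rat>" "\<And>n. l < q n" "\<And>n. q n < l + 1 / real (Suc n)"
    by auto
  have lim0: "(\<lambda>n. l + 1 / real (Suc n)) \<longlonglongrightarrow> l + 0"
    by (intro tendsto_add tendsto_const LIMSEQ_inverse_real_of_nat[unfolded inverse_eq_divide])
  have e1: "\<forall>\<^sub>F n in sequentially. l \<le> q n"
    by (intro always_eventually allI less_imp_le q(2))
  have e2: "\<forall>\<^sub>F n in sequentially. q n \<le> l + 1 / real (Suc n)"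
    by (intro always_eventually allI less_imp_le q(3))
  have ql: "q \<longlonglongrightarrow> l"
    using tendsto_sandwich[OF e1 e2 tendsto_const] lim0 by simp
  have lim: "(\<lambda>n. \<integral>x. indicator {x\<in>space M. q n < f x} x * b x \<partial>M) \<longlonglongrightarrow> (\<integral>x. indicator {x\<in>space M. l < f x} x * b x \<partial>M)"
  proof (rule Bochner_Integration.integral_dominated_convergence[where w="\<lambda>x. cmod (b x)"])
    show "(\<lambda>x. indicator {x\<in>space M. l < f x} x * b x) \<in> borel_measurable M" by measurable
    show "\<And>n. (\<lambda>x. indicator {x\<in>space M. q n < f x} x * b x) \<in> borel_measurable M" by measurable
    show "integrable M (\<lambda>x. cmod (b x))" using L2_integrable[OF b] by simp
    show "\<And>n. AE x in M. norm (indicator {x\<in>space M. q n < f x} x * b x) \<le> cmod (b x)"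
      by (auto simp: norm_mult split: split_indicator)
    show "AE x in M. (\<lambda>n. indicator {x\<in>space M. q n < f x} x * b x) \<longlonglongrightarrow> indicator {x\<in>space M. l < f x} x * b x"
    proof (rule AE_I2)
      fix x assume x: "x \<in> space M"
      show "(\<lambda>n. indicator {x\<in>space M. q n < f x} x * b x) \<longlonglongrightarrow> indicator {x\<in>space M. l < f x} x * b x"
      proof (cases "l < f x")
        case True
        have ev: "eventually (\<lambda>n. q n < f x) sequentially"
          using order_tendstoD(2)[OF ql True] .
        have "eventually (\<lambda>n. indicator {x\<in>space M. q n < f x} x * b x = indicator {x\<in>space M. l < f x} x * b x) sequentially"
          using ev by (rule eventually_mono) (simp add: x True)
        then show ?thesis by (rule tendsto_eventually)
      next
        case False
        have nq: "\<not> q n < f x" for n using q(2)[of n] False by linarith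
        have e1: "(\<lambda>n. indicator {x\<in>space M. q n < f x} x * b x) = (\<lambda>n. 0)"
          by (simp add: fun_eq_iff nq)
        have e2: "indicator {x\<in>space M. l < f x} x * b x = 0" using False by simp
        show ?thesis unfolding e1 e2 by (rule tendsto_const)
      qed
    qed
  qed
  have "inner_L2 M (indicator {x\<in>space M. q n < f x}) b = 0" for n
    using z q(1) by blast
  then have "\<And>n. (\<integral>x. indicator {x\<in>space M. q n < f x} x * b x \<partial>M) = 0"
    unfolding inner_L2_def by simp
  with lim have "(\<lambda>n. 0) \<longlonglongrightarrow> (\<integral>x. indicator {x\<in>space M. l < f x} x * b x \<partial>M)" by simp
  from LIMSEQ_unique[OF tendsto_const this]
  have "(\<integral>x. indicator {x\<in>space M. l < f x} x * b x \<partial>M) = 0" by simp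
  then show ?thesis unfolding inner_L2_def by simp
qed

lemma dom_bound:
  assumes rho: "density_op M \<rho>" and K: "\<forall>u\<in>L2 M. norm2_L2 M (\<rho> u) \<le> K * norm2_L2 M u"
    and F: "finite F" "F \<subseteq> L2 M" and orth: "\<And>b b'. b \<in> F \<Longrightarrow> b' \<in> F \<Longrightarrow> inner_L2 M b b' = (if b = b' then 1 else 0)"
    and A: "A \<in> sets M"
  shows "(\<Sum>b\<in>F. cmod (inner_L2 M (indicator A) b * inner_L2 M (\<rho> b) (indicator A))) \<le> (1 + \<bar>K\<bar>) / 2 * measure M A"
proof -
  define ch where "ch = (indicator A :: 'a \<Rightarrow> complex)"
  have chi: "ch \<in> L2 M" unfolding ch_def by (rule ind_L2[OF A])
  have rchi: "\<rho> ch \<in> L2 M" using density_props(1)[OF rho chi] .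
  have trm: "cmod (inner_L2 M ch b * inner_L2 M (\<rho> b) ch) \<le> ((cmod (inner_L2 M b ch))^2 + (cmod (inner_L2 M b (\<rho> ch)))^2) / 2"
    if b: "b \<in> F" for b
  proof -
    have bL2: "b \<in> L2 M" using b F by auto
    have e1: "cmod (inner_L2 M ch b) = cmod (inner_L2 M b ch)" by (simp add: inner_cnj[of ch])
    have "inner_L2 M (\<rho> b) ch = cnj (inner_L2 M ch (\<rho> b))" by (rule inner_cnj)
    also have "inner_L2 M ch (\<rho> b) = cnj (inner_L2 M b (\<rho> ch))" by (rule density_SA[OF rho chi bL2])
    finally have e2: "inner_L2 M (\<rho> b) ch = inner_L2 M b (\<rho> ch)" by simp
    show ?thesis unfolding norm_mult e1 e2 using two_mult_le_sq[of "cmod (inner_L2 M b ch)" "cmod (inner_L2 M b (\<rho> ch))"] by simp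
  qed
  have "(\<Sum>b\<in>F. cmod (inner_L2 M ch b * inner_L2 M (\<rho> b) ch))
      \<le> (\<Sum>b\<in>F. ((cmod (inner_L2 M b ch))^2 + (cmod (inner_L2 M b (\<rho> ch)))^2) / 2)"
    by (rule sum_mono) (rule trm)
  also have "\<dots> = ((\<Sum>b\<in>F. (cmod (inner_L2 M b ch))^2) + (\<Sum>b\<in>F. (cmod (inner_L2 M b (\<rho> ch)))^2)) / 2"
    by (simp add: sum.distrib[symmetric] sum_divide_distrib)
  also have "\<dots> \<le> (norm2_L2 M ch + norm2_L2 M (\<rho> ch)) / 2"
    using bessel[OF F orth chi] bessel[OF F orth rchi] by simp
  also have "\<dots> \<le> (norm2_L2 M ch + \<bar>K\<bar> * norm2_L2 M ch) / 2"
  proof -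
    have "norm2_L2 M (\<rho> ch) \<le> K * norm2_L2 M ch" using K chi by blast
    also have "\<dots> \<le> \<bar>K\<bar> * norm2_L2 M ch" by (intro mult_right_mono norm2_nonneg) simp
    finally show ?thesis by simp
  qed
  also have "\<dots> = (1 + \<bar>K\<bar>) / 2 * measure M A"
    unfolding ch_def norm2_ind[OF A] by (simp add: algebra_simps)
  finally show ?thesis unfolding ch_def .
qed

lemma tail_integrable:
  fixes f :: "'a \<Rightarrow> real"
  assumes f[measurable]: "f \<in> borel_measurable M" and fi: "integrable M f"
    and fnn: "\<forall>x\<in>space M. 0 \<le> f x"
  shows "set_integrable lborel {0..} (\<lambda>l. measure M {x\<in>space M. l < f x})"
proof -
  interpret R: pair_sigma_finite M lborel
    by (simp add: pair_sigma_finite_def prob_space_axioms prob_space_imp_sigma_finite sigma_finite_lborel)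
  interpret R': pair_sigma_finite lborel M
    by (simp add: pair_sigma_finite_def prob_space_axioms prob_space_imp_sigma_finite sigma_finite_lborel)
  define F where "F = (\<lambda>z::'a\<times>real. if 0 \<le> snd z \<and> snd z < f (fst z) then 1 else (0::real))"
  have Fm[measurable]: "F \<in> borel_measurable (M \<Otimes>\<^sub>M lborel)" unfolding F_def by measurable
  have Fsec: "(\<lambda>l. F (x,l)) = indicator {0..<f x}" for x
    unfolding F_def by (auto simp: fun_eq_iff split: split_indicator)
  have intF: "integrable (M \<Otimes>\<^sub>M lborel) F"
  proof (rule R.Fubini_integrable)
    show "F \<in> borel_measurable (M \<Otimes>\<^sub>M lborel)" by (rule Fm)
    have "\<And>x. (\<lambda>l. norm (F (x,l))) = indicator {0..<f x}"
      unfolding F_def by (auto simp: fun_eq_iff split: split_indicator)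
    then show "integrable M (\<lambda>x. \<integral>l. norm (F (x, l)) \<partial>lborel)"
      using fi by (rule_tac integrable_cong_space[OF fi]) (simp add: fnn)
    show "AE x in M. integrable lborel (\<lambda>l. F (x, l))"
      unfolding Fsec by (auto simp: emeasure_Ico_finite)
  qed
  have intFs: "integrable (lborel \<Otimes>\<^sub>M M) (\<lambda>(x, y). F (y, x))"
    by (rule R.integrable_product_swap[OF intF])
  have "integrable lborel (\<lambda>l. \<integral>x. (\<lambda>(x, y). F (y, x)) (l, x) \<partial>M)"
    by (rule R'.integrable_fst'[OF intFs])
  moreover have "(\<integral>x. F (x, l) \<partial>M) = indicator {0..} l *\<^sub>R measure M {x\<in>space M. l < f x}" for l
  proof (cases "0 \<le> l")
    case False then show ?thesis unfolding F_def by simp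
  next
    case True
    have "(\<integral>x. F (x, l) \<partial>M) = (\<integral>x. indicator {x\<in>space M. l < f x} x \<partial>M)"
      by (rule Bochner_Integration.integral_cong) (auto simp: F_def True split: split_indicator)
    also have "\<dots> = measure M {x\<in>space M. l < f x}"
      by (simp add: Int_absorb2)
    finally show ?thesis using True by simp
  qed
  ultimately show ?thesis unfolding set_integrable_def by simp
qed

end
theorem theorem3p4:
  fixes M :: "'a measure" and \<rho> :: "('a \<Rightarrow> complex) \<Rightarrow> ('a \<Rightarrow> complex)" and f :: "'a \<Rightarrow> real"
  assumes "prob_space M"
    and "density_op M \<rho>"
    and "f \<in> borel_measurable M" and "integrable M (\<lambda>x. (f x)\<^sup>2)"
    and "\<forall>x\<in>space M. 0 \<le> f x"
  shows "set_integrable lborel {0..} (\<lambda>l::real. mu_rho M \<rho> {x\<in>space M. f x > l})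
       \<and> q_integral M \<rho> f = (LINT l:{0..}|lborel. mu_rho M \<rho> {x\<in>space M. f x > l})"
proof -
  interpret prob_space M by (rule assms(1))
  note rho = assms(2)
  have f[measurable]: "f \<in> borel_measurable M" by (rule assms(3))
  have f2: "integrable M (\<lambda>x. (f x)^2)" using assms(4) by simp
  have fnn: "\<forall>x\<in>space M. 0 \<le> f x" by (rule assms(5))
  have fi: "integrable M f" by (rule f_L2_integrable[OF f f2])
  define B0 where "B0 = (SOME B. onb M B)"
  have "\<exists>B. onb M B" using rho unfolding density_op_def by blast
  then have onb: "onb M B0" unfolding B0_def by (rule someI_ex)
  then have BL2: "B0 \<subseteq> L2 M" and orth: "\<forall>b\<in>B0. \<forall>b'\<in>B0. inner_L2 M b b' = (if b = b' then 1 else 0)"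
    unfolding onb_def by auto
  obtain K where K: "\<forall>u\<in>L2 M. norm2_L2 M (\<rho> u) \<le> K * norm2_L2 M u"
    using density_props(5)[OF rho] by blast
  define A where "A l = {x\<in>space M. l < f x}" for l
  have Asets: "A l \<in> sets M" for l unfolding A_def by measurable
  define g where "g b l = inner_L2 M (indicator (A l)) b * inner_L2 M (\<rho> b) (indicator (A l))" for b l
  define gg where "gg b l = indicator {0..} l *\<^sub>R g b l" for b and l :: real
  define S where "S = {b\<in>B0. \<exists>q\<in>\<rat>. inner_L2 M b (indicator (A q)) \<noteq> 0}"
  have "S = (\<Union>q\<in>\<rat>. {b\<in>B0. inner_L2 M b (indicator (A q)) \<noteq> 0})"
    unfolding S_def by auto
  moreover have "countable {b\<in>B0. inner_L2 M b (indicator (A q)) \<noteq> 0}" for q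
    by (rule countable_nonzero[OF BL2 orth ind_L2[OF Asets]])
  ultimately have Scount: "countable S" by (simp add: countable_rat)
  have SB: "S \<subseteq> B0" unfolding S_def by auto
  have zero: "gg b l = 0" if b: "b \<in> B0" "b \<notin> S" for b l
  proof -
    have bL2: "b \<in> L2 M" using b BL2 by auto
    have "\<forall>q\<in>\<rat>. inner_L2 M (indicator {x\<in>space M. q < f x}) b = 0"
    proof
      fix q :: real assume "q \<in> \<rat>"
      then have "inner_L2 M b (indicator (A q)) = 0" using b unfolding S_def by auto
      then show "inner_L2 M (indicator {x\<in>space M. q < f x}) b = 0"
        unfolding A_def by (subst inner_cnj) simp
    qed
    from ind_inner_zero[OF f bL2 this, of l]
    have "inner_L2 M (indicator (A l)) b = 0" unfolding A_def .
    then show ?thesis unfolding gg_def g_def by simp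
  qed
  have int: "integrable lborel (gg b)" if b: "b \<in> B0" for b
  proof -
    have bL2: "b \<in> L2 M" using b BL2 by auto
    show ?thesis using quant_term(1)[OF rho f f2 fnn bL2]
      unfolding set_integrable_def gg_def g_def A_def .
  qed
  define C where "C = (1 + \<bar>K\<bar>) / 2"
  define D where "D l = indicator {0..} l * (C * measure M (A l))" for l :: real
  have dom: "(\<Sum>b\<in>F. cmod (gg b l)) \<le> D l" if F: "finite F" "F \<subseteq> B0" for F l
  proof -
    have orthF: "\<And>b b'. b \<in> F \<Longrightarrow> b' \<in> F \<Longrightarrow> inner_L2 M b b' = (if b = b' then 1 else 0)"
      using orth F by blast
    have "(\<Sum>b\<in>F. cmod (gg b l)) = indicator {0..} l * (\<Sum>b\<in>F. cmod (g b l))"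
      unfolding gg_def by (simp add: sum_distrib_left)
    also have "\<dots> \<le> indicator {0..} l * (C * measure M (A l))"
    proof (rule mult_left_mono)
      show "(\<Sum>b\<in>F. cmod (g b l)) \<le> C * measure M (A l)"
        unfolding g_def C_def by (rule dom_bound[OF rho K F(1) _ orthF Asets]) (use F BL2 in auto)
    qed simp
    finally show ?thesis unfolding D_def .
  qed
  have Dint: "integrable lborel D"
  proof -
    have "integrable lborel (\<lambda>l. indicator {0..} l *\<^sub>R measure M (A l))"
      using tail_integrable[OF f fi fnn] unfolding set_integrable_def A_def .
    then have "integrable lborel (\<lambda>l. C * (indicator {0..} l *\<^sub>R measure M (A l)))" by simp
    then show ?thesis unfolding D_def by (simp add: mult_ac)
  qed
  note X = infsum_integral_interchange[OF Scount SB, of gg, OF zero int dom Dint]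
  have mu: "mu_rho M \<rho> {x\<in>space M. f x > l} = infsum (\<lambda>b. g b l) B0" for l
  proof -
    have "mu_rho M \<rho> {x\<in>space M. f x > l} = infsum (\<lambda>b. inner_L2 M b (\<rho> (mu_op M (A l) b))) B0"
      unfolding mu_rho_def trace_op_def B0_def[symmetric] A_def by simp
    also have "\<dots> = infsum (\<lambda>b. g b l) B0"
      by (rule infsum_cong) (use BL2 in \<open>auto simp: g_def mu_term[OF rho Asets]\<close>)
    finally show ?thesis .
  qed
  have pt: "infsum (\<lambda>b. gg b l) B0 = indicator {0..} l *\<^sub>R mu_rho M \<rho> {x\<in>space M. f x > l}" for l
    unfolding gg_def mu by (rule infsum_scaleR_right)
  have q: "q_integral M \<rho> f = infsum (\<lambda>b. integral\<^sup>L lborel (gg b)) B0"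
  proof -
    have "q_integral M \<rho> f = infsum (\<lambda>b. inner_L2 M b (\<rho> (quant M f b))) B0"
      unfolding q_integral_def trace_op_def B0_def[symmetric] by simp
    also have "\<dots> = infsum (\<lambda>b. integral\<^sup>L lborel (gg b)) B0"
    proof (rule infsum_cong)
      fix b assume "b \<in> B0"
      then have bL2: "b \<in> L2 M" using BL2 by auto
      show "inner_L2 M b (\<rho> (quant M f b)) = integral\<^sup>L lborel (gg b)"
        using quant_term(2)[OF rho f f2 fnn bL2]
        unfolding gg_def g_def A_def set_lebesgue_integral_def .
    qed
    finally show ?thesis .
  qed
  show ?thesis
  proof
    show "set_integrable lborel {0..} (\<lambda>l::real. mu_rho M \<rho> {x\<in>space M. f x > l})"
      using X(1) unfolding set_integrable_def pt .
    have "q_integral M \<rho> f = integral\<^sup>L lborel (\<lambda>l. infsum (\<lambda>b. gg b l) B0)"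
      unfolding q by (rule infsumI[OF X(2)])
    then show "q_integral M \<rho> f = (LINT l:{0..}|lborel. mu_rho M \<rho> {x\<in>space M. f x > l})"
      unfolding set_lebesgue_integral_def pt .
  qed
qed

end
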